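(* Let $F$ be an $m\times n$ matrix, $B$ an $m\times p$ matrix and $H$ an $l\times n$ matrix. Let $x\in\mathbb{R}^n$ satisfy $Fx=Bf$ for an unknown $f\in\mathbb{R}^p$, and let the observation be $y=Hx+\eta\in\mathbb{R}^l$, where $\eta$ is a realization of a zero-mean random $l$-vector with unknown correlation matrix $R_\eta=E\eta\eta'$. Suppose $$\mathscr G=\{f\in\mathbb{R}^p:(Q_1f,f)_p\le 1\},\qquad \mathscr G_2=\{R_\eta:\operatorname{tr}(Q_2R_\eta)\le 1\},$$ where $Q_1$ ($p\times p$) and $Q_2$ ($l\times l$) are symmetric positive definite matrices. Let $\mathscr F=\{F'z+H'u: z\in\mathbb{R}^m,u\in\mathbb{R}^l\}$. If $\ell\in\mathscr F$, then the minimax a priori estimate of $x\mapsto(\ell,x)_n$ is $\widehat{(\ell,x)}=(\hat u,y)_l$ (i.e. $\hat c=0$) with $\hat u=Q_2Hp$, where $p$ together with some $\hat z\in\mathbb{R}^m$ solves $$Fp=BQ_1^{-1}B'\hat z,\qquad F'\hat z=\ell-H'Q_2Hp,$$ and the minimax a priori error equals $$\sup_{x,R_\eta}E[(\ell,x)_n-\widehat{(\ell,x)}]^2=(\ell,p)_n.$$ If $\ell\notin\mathscr F$, then the minimax a priori error is infinite.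
   Context: $(\cdot,\cdot)_k$ is the Euclidean inner product on $\mathbb{R}^k$; $B'$ is the transpose. For $\ell\in\mathbb{R}^n$, estimates of $(\ell,x)_n$ are affine functions $y\mapsto(u,y)_l+c$, $u\in\mathbb{R}^l$, $c\in\mathbb{R}$, with worst-case error $\sigma(u,c)=\sup\{E[(\ell,x)_n-(u,y)_l-c]^2: Fx\in B(\mathscr G), R_\eta\in\mathscr G_2\}$, where $B(\mathscr G)=\{Bf:f\in\mathscr G\}$. The minimax a priori (mean-squared) estimate is $(\hat u,y)_l+\hat c$ with $\sigma(\hat u,\hat c)=\inf_{u,c}\sigma(u,c)$; this infimum $\hat\sigma$ is the minimax a priori error. *)

theory Defs
  imports "HOL-Probability.Probability"
begin

definition sym_posdef :: "real^'k^'k \<Rightarrow> bool" where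
  "sym_posdef Q \<longleftrightarrow> transpose Q = Q \<and> (\<forall>v. v \<noteq> 0 \<longrightarrow> 0 < v \<bullet> (Q *v v))"

definition Gset :: "real^'p^'p \<Rightarrow> (real^'p) set" where
  "Gset Q1 = {f. (Q1 *v f) \<bullet> f \<le> 1}"

text \<open>Correlation matrix E[eta eta'] of a random l-vector, given by its distribution mu on R^l.\<close>
definition corr_matrix :: "(real^'l) measure \<Rightarrow> real^'l^'l" where
  "corr_matrix \<mu> = (\<chi> i j. \<integral> e. e$i * e$j \<partial>\<mu>)"

definition noise_dists :: "real^'l^'l \<Rightarrow> (real^'l) measure set" where
  "noise_dists Q2 = {\<mu>. prob_space \<mu> \<and> sets \<mu> = sets borel \<and>
      (\<forall>i. integrable \<mu> (\<lambda>e. (e$i)^2)) \<and> (\<forall>i. (\<integral> e. e$i \<partial>\<mu>) = 0) \<and>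
      trace (Q2 ** corr_matrix \<mu>) \<le> 1}"

definition worst_error ::
  "real^'n^'m \<Rightarrow> real^'p^'m \<Rightarrow> real^'n^'l \<Rightarrow> real^'p^'p \<Rightarrow> real^'l^'l \<Rightarrow> real^'n
   \<Rightarrow> real^'l \<Rightarrow> real \<Rightarrow> ennreal" where
  "worst_error F B H Q1 Q2 lv u c =
     (SUP x \<in> {x. \<exists>f \<in> Gset Q1. F *v x = B *v f}. SUP \<mu> \<in> noise_dists Q2.
        \<integral>\<^sup>+ e. ennreal (((lv \<bullet> x) - (u \<bullet> (H *v x + e)) - c)^2) \<partial>\<mu>)"

definition minimax_error ::
  "real^'n^'m \<Rightarrow> real^'p^'m \<Rightarrow> real^'n^'l \<Rightarrow> real^'p^'p \<Rightarrow> real^'l^'l \<Rightarrow> real^'n \<Rightarrow> ennreal" where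
  "minimax_error F B H Q1 Q2 lv = (INF uc. worst_error F B H Q1 Q2 lv (fst uc) (snd uc))"

definition Fspace :: "real^'n^'m \<Rightarrow> real^'n^'l \<Rightarrow> (real^'n) set" where
  "Fspace F H = {transpose F *v z + transpose H *v u | z u. True}"

end

theory Submission
  imports Defs
begin


lemma tr_dot: "(transpose A *v x) \<bullet> y = x \<bullet> ((A::real^'a^'b) *v y)"
  by (simp add: dot_lmul_matrix)

lemma sym_dot: "transpose A = A \<Longrightarrow> x \<bullet> (A *v y) = y \<bullet> ((A::real^'a^'a) *v x)"
  by (metis tr_dot inner_commute)

lemma quad_disc:
  fixes A B C :: real
  assumes "\<And>t. 0 \<le> A + 2*t*B + t^2*C"
  shows "B^2 \<le> A*C"
proof -
  have C: "0 \<le> C"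
  proof (rule ccontr)
    assume "\<not> 0 \<le> C"
    hence Cn: "C < 0" by simp
    define t where "t = (\<bar>A\<bar> + 2*\<bar>B\<bar> + 1) / (-C) + 1"
    have t1: "t \<ge> 1" using Cn unfolding t_def by (simp add: field_simps)
    have "t * (-C) \<ge> \<bar>A\<bar> + 2*\<bar>B\<bar> + 1" using Cn unfolding t_def by (simp add: field_simps)
    hence "t^2 * (-C) \<ge> t*(\<bar>A\<bar> + 2*\<bar>B\<bar> + 1)" using t1
      by (metis (no_types, lifting) mult.assoc mult_left_mono order_trans less_eq_real_def
            zero_less_one power2_eq_square)
    moreover have "t*(\<bar>A\<bar> + 2*\<bar>B\<bar> + 1) \<ge> \<bar>A\<bar> + 2*t*\<bar>B\<bar> + 1" using t1
      by (simp add: algebra_simps) (smt (verit) mult_left_mono abs_ge_zero mult_le_cancel_right1)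
    moreover have "A + 2*t*B \<le> \<bar>A\<bar> + 2*t*\<bar>B\<bar>" using t1
      by (smt (verit) abs_ge_self mult_left_mono)
    ultimately have "A + 2*t*B + t^2*C < 0" by linarith
    with assms[of t] show False by linarith
  qed
  show ?thesis
  proof (cases "C = 0")
    case True
    have "B = 0"
    proof (rule ccontr)
      assume "B \<noteq> 0"
      have "0 \<le> A + 2*(-(\<bar>A\<bar>+1)/(2*B))*B" using assms[of "-(\<bar>A\<bar>+1)/(2*B)"] True by simp
      also have "\<dots> = A - (\<bar>A\<bar>+1)" using \<open>B \<noteq> 0\<close> by (simp add: field_simps)
      finally show False by linarith
    qed
    thus ?thesis using True by simp
  next
    case False
    hence Cp: "C > 0" using C by simp
    have "0 \<le> A + 2*(-B/C)*B + (-B/C)^2*C" by (rule assms)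
    also have "\<dots> = A - B^2/C" using Cp by (simp add: field_simps power2_eq_square)
    finally show ?thesis using Cp by (simp add: field_simps)
  qed
qed

lemma gen_CS:
  fixes Q :: "real^'a^'a"
  assumes sym: "transpose Q = Q" and psd: "\<And>v. 0 \<le> v \<bullet> (Q *v v)"
  shows "(w \<bullet> (Q *v e))^2 \<le> (w \<bullet> (Q *v w)) * (e \<bullet> (Q *v e))"
proof (rule quad_disc)
  fix t
  have "0 \<le> (w + t *\<^sub>R e) \<bullet> (Q *v (w + t *\<^sub>R e))" by (rule psd)
  also have "\<dots> = w \<bullet> (Q *v w) + t * (w \<bullet> (Q *v e)) + t * (e \<bullet> (Q *v w)) + t^2 * (e \<bullet> (Q *v e))"
    by (simp add: matrix_vector_right_distrib matrix_vector_mult_scaleR inner_add_left inner_add_right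
          power2_eq_square algebra_simps)
  also have "e \<bullet> (Q *v w) = w \<bullet> (Q *v e)" by (rule sym_dot[OF sym])
  finally show "0 \<le> w \<bullet> (Q *v w) + 2 * t * (w \<bullet> (Q *v e)) + t\<^sup>2 * (e \<bullet> (Q *v e))" by simp
qed

lemma pd_psd: "sym_posdef Q \<Longrightarrow> 0 \<le> v \<bullet> (Q *v v)"
  unfolding sym_posdef_def by (cases "v = 0") (auto intro: less_imp_le)

lemma pd_zero: "sym_posdef Q \<Longrightarrow> v \<bullet> (Q *v v) = 0 \<Longrightarrow> v = 0"
  unfolding sym_posdef_def by force

lemma pd_inv:
  fixes Q :: "real^'a^'a"
  assumes "sym_posdef Q"
  shows "Q ** matrix_inv Q = mat 1 \<and> matrix_inv Q ** Q = mat 1"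
proof -
  have "inj ((*v) Q)"
  proof (rule linear_inj_on_iff_eq_0[THEN iffD2])
    show "linear ((*v) Q)" by simp
    show "\<forall>x\<in>UNIV. Q *v x = 0 \<longrightarrow> x = 0" using pd_zero[OF assms] by auto
  qed auto
  hence "det Q \<noteq> 0" using det_nz_iff_inj[of "(*v) Q"] by simp
  hence "invertible Q" by (simp add: invertible_det_nz)
  thus ?thesis unfolding invertible_def matrix_inv_def by (rule someI_ex)
qed

lemma inv_psd:
  assumes "sym_posdef Q"
  shows "0 \<le> w \<bullet> (matrix_inv Q *v w)"
proof -
  let ?g = "matrix_inv Q *v w"
  have "w = Q *v ?g" using pd_inv[OF assms] by (simp add: matrix_vector_mul_assoc)
  hence "w \<bullet> ?g = ?g \<bullet> (Q *v ?g)" by (metis inner_commute)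
  thus ?thesis using pd_psd[OF assms] by simp
qed

lemma inv_zero:
  assumes "sym_posdef Q" "w \<bullet> (matrix_inv Q *v w) = 0"
  shows "w = 0"
proof -
  let ?g = "matrix_inv Q *v w"
  have w: "w = Q *v ?g" using pd_inv[OF assms(1)] by (simp add: matrix_vector_mul_assoc)
  hence "w \<bullet> ?g = ?g \<bullet> (Q *v ?g)" by (metis inner_commute)
  hence "?g = 0" using pd_zero[OF assms(1)] assms(2) by simp
  thus ?thesis using w by simp
qed



lemma inv_sym_dot:
  assumes "sym_posdef Q"
  shows "w \<bullet> (matrix_inv Q *v v) = v \<bullet> (matrix_inv Q *v w)"
proof -
  have sym: "transpose Q = Q" using assms sym_posdef_def by blast
  have w: "w = Q *v (matrix_inv Q *v w)" and v: "v = Q *v (matrix_inv Q *v v)"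
    using pd_inv[OF assms] by (simp_all add: matrix_vector_mul_assoc)
  have "w \<bullet> (matrix_inv Q *v v) = (matrix_inv Q *v v) \<bullet> (Q *v (matrix_inv Q *v w))"
    using w by (metis inner_commute)
  also have "\<dots> = (matrix_inv Q *v w) \<bullet> (Q *v (matrix_inv Q *v v))" by (rule sym_dot[OF sym])
  also have "\<dots> = v \<bullet> (matrix_inv Q *v w)" using v by (metis inner_commute)
  finally show ?thesis .
qed

lemma Mv: "(B ** Qi ** transpose B) *v z = B *v (Qi *v (transpose B *v z))"
  by (simp add: matrix_vector_mul_assoc matrix_mul_assoc)

lemma kkt_exists:
  fixes F :: "real^'n^'m" and B :: "real^'p^'m" and H :: "real^'n^'l"
    and Q1 :: "real^'p^'p" and Q2 :: "real^'l^'l" and lv :: "real^'n"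
  assumes Q1: "sym_posdef Q1" and Q2: "sym_posdef Q2" and lF: "lv \<in> Fspace F H"
  shows "\<exists>p z. F *v p = (B ** matrix_inv Q1 ** transpose B) *v z \<and>
                   transpose F *v z = lv - transpose H *v (Q2 *v (H *v p))"
proof -
  define Qi where "Qi = matrix_inv Q1"
  define N where "N p = transpose H *v (Q2 *v (H *v p))" for p
  define M where "M z = B *v (Qi *v (transpose B *v z))" for z
  define S where "S x = (N (fst x) + transpose F *v snd x, F *v fst x - M (snd x))" for x
  have sym2: "transpose Q2 = Q2" using Q2 sym_posdef_def by blast
  have Nsym: "a \<bullet> N c = c \<bullet> N a" for a c
  proof -
    have "a \<bullet> N c = (H *v a) \<bullet> (Q2 *v (H *v c))" unfolding N_def
      by (metis inner_commute tr_dot)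
    also have "\<dots> = (H *v c) \<bullet> (Q2 *v (H *v a))" by (rule sym_dot[OF sym2])
    also have "\<dots> = c \<bullet> N a" unfolding N_def by (metis inner_commute tr_dot)
    finally show ?thesis .
  qed
  have Msym: "a \<bullet> M c = c \<bullet> M a" for a c
  proof -
    have "a \<bullet> M c = (transpose B *v a) \<bullet> (Qi *v (transpose B *v c))" unfolding M_def
      by (metis inner_commute tr_dot transpose_transpose)
    also have "\<dots> = (transpose B *v c) \<bullet> (Qi *v (transpose B *v a))"
      unfolding Qi_def by (rule inv_sym_dot[OF Q1])
    also have "\<dots> = c \<bullet> M a" unfolding M_def by (metis inner_commute tr_dot transpose_transpose)
    finally show ?thesis .
  qed
  have Sadj: "S r \<bullet> x = r \<bullet> S x" for r x
  proof -
    obtain a b where r: "r = (a,b)" by force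
    obtain c d where x: "x = (c,d)" by force
    have "S r \<bullet> x = N a \<bullet> c + (transpose F *v b) \<bullet> c + (F *v a) \<bullet> d - M b \<bullet> d"
      unfolding S_def r x by (simp only: inner_Pair inner_add_left inner_diff_left fst_conv snd_conv)
    also have "N a \<bullet> c = a \<bullet> N c" using Nsym[of c a] by (simp add: inner_commute)
    also have "M b \<bullet> d = b \<bullet> M d" using Msym[of d b] by (simp add: inner_commute)
    also have "(transpose F *v b) \<bullet> c = b \<bullet> (F *v c)" by (rule tr_dot)
    also have "(F *v a) \<bullet> d = a \<bullet> (transpose F *v d)" using tr_dot[of F d a] by (simp add: inner_commute)
    also have "a \<bullet> N c + b \<bullet> (F *v c) + a \<bullet> (transpose F *v d) - b \<bullet> M d = r \<bullet> S x"
      unfolding S_def r x by (simp only: inner_Pair inner_add_right inner_diff_right fst_conv snd_conv)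
    finally show ?thesis .
  qed
  have linS: "linear S"
    unfolding S_def N_def M_def
    by (rule linearI) (auto simp: algebra_simps matrix_vector_right_distrib matrix_vector_mult_scaleR
        scaleR_add_right scaleR_diff_right)
  obtain y r where y: "y \<in> span (range S)" and orth: "\<And>w. w \<in> span (range S) \<Longrightarrow> orthogonal r w"
    and dec: "(lv, 0::real^'m) = y + r"
    by (rule orthogonal_subspace_decomp_exists[of "range S" "(lv, 0::real^'m)"]) blast
  have "r \<bullet> S (S r) = 0" using orth[of "S (S r)"] by (simp add: span_base orthogonal_def)
  hence "S r \<bullet> S r = 0" using Sadj[of r "S r"] by simp
  hence Sr: "S r = 0" by simp
  obtain a b where r: "r = (a,b)" by force
  have e1: "N a + transpose F *v b = 0" and e2: "F *v a = M b"
    using Sr unfolding S_def r by (auto simp: zero_prod_def)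
  have "a \<bullet> N a + a \<bullet> (transpose F *v b) = 0" using e1
    by (metis inner_add_right inner_zero_right)
  moreover have "a \<bullet> (transpose F *v b) = b \<bullet> M b"
    using tr_dot[of F b a] e2 by (metis inner_commute)
  ultimately have sum0: "a \<bullet> N a + b \<bullet> M b = 0" by simp
  have Na: "a \<bullet> N a = (H *v a) \<bullet> (Q2 *v (H *v a))" unfolding N_def
    by (metis inner_commute tr_dot)
  have Mb: "b \<bullet> M b = (transpose B *v b) \<bullet> (Qi *v (transpose B *v b))" unfolding M_def
    by (metis inner_commute tr_dot transpose_transpose)
  have n1: "0 \<le> a \<bullet> N a" using Na pd_psd[OF Q2] by simp
  have n2: "0 \<le> b \<bullet> M b" using Mb inv_psd[OF Q1] Qi_def by simp
  have "H *v a = 0" using pd_zero[OF Q2] Na sum0 n1 n2 by simp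
  moreover have "transpose B *v b = 0" using inv_zero[OF Q1] Mb sum0 n1 n2 Qi_def by simp
  hence "F *v a = 0" using e2 unfolding M_def by simp
  moreover obtain z0 u0 where l: "lv = transpose F *v z0 + transpose H *v u0"
    using lF unfolding Fspace_def by blast
  ultimately have "lv \<bullet> a = 0" by (simp add: inner_add_left tr_dot del: transpose_matrix_vector)
  hence wr: "(lv, 0::real^'m) \<bullet> r = 0" using r by simp
  have "y \<bullet> r = 0" using orth[OF y] by (simp add: orthogonal_def inner_commute)
  hence "r \<bullet> r = 0" using wr dec by (metis add_diff_cancel_left' inner_diff_left diff_zero)
  hence "r = 0" by simp
  hence "(lv, 0) \<in> span (range S)" using dec y by simp
  hence "(lv, 0) \<in> range S" using span_linear_image[OF linS, of UNIV] by simp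
  then obtain x where "(lv, 0) = S x" by blast
  hence "lv = N (fst x) + transpose F *v snd x" "F *v fst x = M (snd x)"
    unfolding S_def by auto
  thus ?thesis unfolding N_def M_def Qi_def Mv
    by (intro exI[of _ "fst x"] exI[of _ "snd x"]) (auto simp: algebra_simps)
qed



definition good :: "(real^'l) measure \<Rightarrow> bool" where
  "good \<mu> \<longleftrightarrow> prob_space \<mu> \<and> sets \<mu> = sets borel \<and> (\<forall>i. integrable \<mu> (\<lambda>e. (e$i)^2))"

lemma noise_good: "\<mu> \<in> noise_dists Q \<Longrightarrow> good \<mu>"
  unfolding noise_dists_def good_def by auto

lemma cont_meas:
  fixes f :: "real^'l \<Rightarrow> real"
  assumes "sets \<mu> = sets borel" "continuous_on UNIV f"
  shows "f \<in> borel_measurable \<mu>"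
proof -
  have "measurable \<mu> (borel::real measure) = measurable borel borel" by (rule measurable_cong_sets[OF assms(1)]) simp
  thus ?thesis using borel_measurable_continuous_onI[OF assms(2)] by auto
qed

lemma good_ee:
  assumes "good \<mu>" shows "integrable \<mu> (\<lambda>e::real^'l. e \<bullet> e)"
proof -
  have "(\<lambda>e::real^'l. e \<bullet> e) = (\<lambda>e. \<Sum>i\<in>UNIV. (e$i)^2)"
    by (auto simp: inner_vec_def power2_eq_square)
  thus ?thesis using assms unfolding good_def by simp
qed

lemma good_bound:
  fixes g :: "real^'l \<Rightarrow> real"
  assumes "good \<mu>" "continuous_on UNIV g" "\<And>e. \<bar>g e\<bar> \<le> C * (1 + e \<bullet> e)"
  shows "integrable \<mu> g"
proof (rule Bochner_Integration.integrable_bound[where f="\<lambda>e::real^'l. C * (1 + e \<bullet> e)"])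
  interpret prob_space \<mu> using assms(1) good_def by blast
  show "integrable \<mu> (\<lambda>e. C * (1 + e \<bullet> e))"
    using good_ee[OF assms(1)] by (intro integrable_mult_right Bochner_Integration.integrable_add) auto
  show "g \<in> borel_measurable \<mu>" using assms cont_meas good_def by blast
  show "AE x in \<mu>. norm (g x) \<le> norm (C * (1 + x \<bullet> x))"
    by (intro AE_I2) (simp only: real_norm_def, rule order_trans[OF assms(3) abs_ge_self])
qed

lemma norm_le_1ee: "norm (e::real^'l) \<le> 1 + e \<bullet> e"
proof -
  have "0 \<le> (norm e - 1)^2" by simp
  hence "2 * norm e \<le> 1 + (norm e)^2" by (simp add: power2_eq_square algebra_simps)
  hence "norm e \<le> 1 + (norm e)^2" using norm_ge_zero[of e] by linarith
  thus ?thesis by (simp add: power2_norm_eq_inner)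
qed

lemma good_nth: "good \<mu> \<Longrightarrow> integrable \<mu> (\<lambda>e::real^'l. e$i)"
  by (rule good_bound[where C=1]) (auto intro!: continuous_intros
       intro: order_trans[OF component_le_norm_cart norm_le_1ee])

lemma good_prod: "good \<mu> \<Longrightarrow> integrable \<mu> (\<lambda>e::real^'l. e$i * e$j)"
proof (rule good_bound[where C=1])
  fix e :: "real^'l"
  have "\<bar>e$i * e$j\<bar> \<le> norm e * norm e"
    by (simp add: abs_mult mult_mono component_le_norm_cart)
  also have "\<dots> = e \<bullet> e" by (simp add: power2_norm_eq_inner[symmetric] power2_eq_square)
  finally show "\<bar>e$i * e$j\<bar> \<le> 1 * (1 + e \<bullet> e)" by simp
qed (auto intro!: continuous_intros)

lemma good_lin: "good \<mu> \<Longrightarrow> integrable \<mu> (\<lambda>e::real^'l. u \<bullet> e)"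
proof (rule good_bound[where C="norm u"])
  fix e :: "real^'l"
  have "\<bar>u \<bullet> e\<bar> \<le> norm u * norm e" by (rule Cauchy_Schwarz_ineq2)
  also have "\<dots> \<le> norm u * (1 + e \<bullet> e)" by (simp add: mult_left_mono norm_le_1ee)
  finally show "\<bar>u \<bullet> e\<bar> \<le> norm u * (1 + e \<bullet> e)" .
qed (auto intro!: continuous_intros)

lemma good_sq: "good \<mu> \<Longrightarrow> integrable \<mu> (\<lambda>e::real^'l. (u \<bullet> e)^2)"
proof (rule good_bound[where C="u \<bullet> u"])
  fix e :: "real^'l"
  have "\<bar>(u \<bullet> e)^2\<bar> = (u \<bullet> e)^2" by simp
  also have "\<dots> \<le> (u \<bullet> u) * (e \<bullet> e)" by (metis Cauchy_Schwarz_ineq)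
  also have "\<dots> \<le> (u \<bullet> u) * (1 + e \<bullet> e)" by (simp add: mult_left_mono)
  finally show "\<bar>(u \<bullet> e)^2\<bar> \<le> (u \<bullet> u) * (1 + e \<bullet> e)" .
qed (auto intro!: continuous_intros)

lemma quad_expand: "e \<bullet> (Q *v e) = (\<Sum>i\<in>UNIV. \<Sum>k\<in>UNIV. Q$i$k * (e$k * (e::real^'l)$i))"
  by (simp add: inner_vec_def matrix_vector_mult_def sum_distrib_left mult_ac)

lemma good_quad: "good \<mu> \<Longrightarrow> integrable \<mu> (\<lambda>e::real^'l. e \<bullet> (Q *v e))"
  unfolding quad_expand by (intro Bochner_Integration.integrable_sum integrable_mult_right good_prod)

lemma good_trace:
  assumes "good \<mu>"
  shows "(\<integral>e. e \<bullet> (Q *v e) \<partial>\<mu>) = trace (Q ** corr_matrix \<mu>)"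
proof -
  have "(\<integral>e. e \<bullet> (Q *v e) \<partial>\<mu>) = (\<Sum>i\<in>UNIV. \<Sum>k\<in>UNIV. Q$i$k * (\<integral>e. e$k * e$i \<partial>\<mu>))"
    unfolding quad_expand
    by (subst Bochner_Integration.integral_sum, intro Bochner_Integration.integrable_sum integrable_mult_right good_prod[OF assms])
       (subst Bochner_Integration.integral_sum, auto intro!: integrable_mult_right good_prod[OF assms])
  also have "\<dots> = trace (Q ** corr_matrix \<mu>)"
    by (simp add: trace_def matrix_matrix_mult_def corr_matrix_def)
  finally show ?thesis .
qed

lemma good_mean0:
  assumes "good \<mu>" "\<forall>i. (\<integral>e. e$i \<partial>\<mu>) = 0"
  shows "(\<integral>e. u \<bullet> (e::real^'l) \<partial>\<mu>) = 0"
proof -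
  have "(\<integral>e. u \<bullet> (e::real^'l) \<partial>\<mu>) = (\<integral>e. (\<Sum>i\<in>UNIV. u$i * e$i) \<partial>\<mu>)"
    by (simp add: inner_vec_def)
  also have "\<dots> = (\<Sum>i\<in>UNIV. u$i * (\<integral>e. e$i \<partial>\<mu>))"
    by (subst Bochner_Integration.integral_sum) (auto intro!: integrable_mult_right good_nth[OF assms(1)])
  finally show ?thesis using assms(2) by simp
qed

lemma noise_J:
  assumes "\<mu> \<in> noise_dists Q"
  shows "(\<integral>\<^sup>+ e. ennreal ((d - u \<bullet> e)^2) \<partial>\<mu>) = ennreal (d^2 + (\<integral>e. (u \<bullet> (e::real^'l))^2 \<partial>\<mu>))"
proof -
  have g: "good \<mu>" by (rule noise_good[OF assms])
  interpret prob_space \<mu> using g good_def by blast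
  have m0: "\<forall>i. (\<integral>e. e$i \<partial>\<mu>) = 0" using assms noise_dists_def by blast
  have eq: "(\<lambda>e. (d - u \<bullet> e)^2) = (\<lambda>e. d^2 + ((-2*d) * (u \<bullet> e) + (u \<bullet> e)^2))"
    by (auto simp: power2_eq_square algebra_simps)
  have int: "integrable \<mu> (\<lambda>e. (d - u \<bullet> e)^2)" unfolding eq
    by (intro Bochner_Integration.integrable_add integrable_mult_right good_lin[OF g] good_sq[OF g] integrable_const)
  have "(\<integral>e. (d - u \<bullet> e)^2 \<partial>\<mu>) = d^2 + ((-2*d) * (\<integral>e. u \<bullet> e \<partial>\<mu>) + (\<integral>e. (u \<bullet> e)^2 \<partial>\<mu>))"
    unfolding eq
    by (subst Bochner_Integration.integral_add, simp, intro Bochner_Integration.integrable_add integrable_mult_right good_lin[OF g] good_sq[OF g],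
        subst Bochner_Integration.integral_add, intro integrable_mult_right good_lin[OF g], rule good_sq[OF g]) (simp add: prob_space)
  also have "\<dots> = d^2 + (\<integral>e. (u \<bullet> e)^2 \<partial>\<mu>)" using good_mean0[OF g m0] by simp
  finally show ?thesis using nn_integral_eq_integral[OF int] by simp
qed



definition tp :: "real^'l \<Rightarrow> (real^'l) measure" where
  "tp v = distr (measure_pmf (bernoulli_pmf (1/2))) borel (\<lambda>b. if b then v else -v)"

lemma tp_T: "(\<lambda>b. if b then v else -v) \<in> measurable (measure_pmf (bernoulli_pmf (1/2))) (borel :: (real^'l) measure)"
proof -
  have "measurable (measure_pmf (bernoulli_pmf (1/2))) (borel :: (real^'l) measure) =
        measurable (count_space UNIV) borel"
    by (rule measurable_cong_sets) simp_all
  thus ?thesis by simp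
qed

lemma tp_prob: "prob_space (tp v)"
  unfolding tp_def
  by (rule prob_space.prob_space_distr[OF prob_space_measure_pmf tp_T])

lemma tp_sets: "sets (tp v) = sets borel"
  unfolding tp_def by simp

lemma tp_integral:
  fixes g :: "real^'l \<Rightarrow> real"
  assumes "continuous_on UNIV g"
  shows "(\<integral>e. g e \<partial>tp v) = g v / 2 + g (-v) / 2"
proof -
  have "(\<integral>e. g e \<partial>tp v) = (\<integral>b. g (if b then v else -v) \<partial>measure_pmf (bernoulli_pmf (1/2)))"
    unfolding tp_def by (rule integral_distr[OF tp_T borel_measurable_continuous_onI[OF assms]])
  also have "\<dots> = g v / 2 + g (-v) / 2" by simp
  finally show ?thesis .
qed

lemma tp_integrable:
  fixes g :: "real^'l \<Rightarrow> real"
  assumes "continuous_on UNIV g"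
  shows "integrable (tp v) g"
  unfolding tp_def
  by (subst integrable_distr_eq[OF tp_T borel_measurable_continuous_onI[OF assms]])
     (rule integrable_measure_pmf_finite, simp)

lemma tp_good: "good (tp v)"
  unfolding good_def using tp_prob tp_sets
  by (auto intro!: tp_integrable continuous_intros)

lemma tp_noise:
  fixes Q :: "real^'l^'l"
  assumes "v \<bullet> (Q *v v) \<le> 1"
  shows "tp v \<in> noise_dists Q"
proof -
  have "trace (Q ** corr_matrix (tp v)) = (\<integral>e. e \<bullet> (Q *v e) \<partial>tp v)"
    using good_trace[of "tp v" Q] tp_good[of v] by simp
  also have "\<dots> = v \<bullet> (Q *v v)"
  proof -
    have "Q *v (-v) = - (Q *v v)" using matrix_vector_mult_scaleR[of Q "-1" v] by simp
    thus ?thesis by (subst tp_integral) (auto intro!: continuous_intros)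
  qed
  finally have tr: "trace (Q ** corr_matrix (tp v)) \<le> 1" using assms by simp
  have m: "(\<integral>e. e$i \<partial>tp v) = 0" for i
    by (subst tp_integral) (auto intro!: continuous_intros)
  show ?thesis unfolding noise_dists_def using tp_good[of v] tr m unfolding good_def by auto
qed

lemma tp_sq: "(\<integral>e. (u \<bullet> e)^2 \<partial>tp v) = (u \<bullet> v)^2"
  by (subst tp_integral) (auto intro!: continuous_intros)



lemma real_lb:
  fixes a b s1 s2 E :: real
  assumes a: "0 \<le> a" and b: "0 \<le> b" and s: "s1 + s2 = a + b"
    and H: "\<And>t r. t^2 * a \<le> 1 \<Longrightarrow> r^2 * b \<le> 1 \<Longrightarrow> t^2 * s1^2 + r^2 * s2^2 \<le> E"
  shows "a + b \<le> E"
proof -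
  have E0: "0 \<le> E" using H[of 0 0] by simp
  have s1z: "s1 = 0" if "a = 0"
  proof (rule ccontr)
    assume "s1 \<noteq> 0"
    define t where "t = (E + 1) / s1"
    have "t^2 * s1^2 = (E+1)^2" unfolding t_def using \<open>s1 \<noteq> 0\<close> by (simp add: power_divide)
    moreover have "(E+1)^2 > E" using E0 by (simp add: power2_eq_square algebra_simps)
      (smt (verit) mult_nonneg_nonneg)
    moreover have "t^2 * s1^2 + 0^2 * s2^2 \<le> E" by (rule H) (simp_all add: that)
    ultimately show False by simp
  qed
  have s2z: "s2 = 0" if "b = 0"
  proof (rule ccontr)
    assume "s2 \<noteq> 0"
    define r where "r = (E + 1) / s2"
    have "r^2 * s2^2 = (E+1)^2" unfolding r_def using \<open>s2 \<noteq> 0\<close> by (simp add: power_divide)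
    moreover have "(E+1)^2 > E" using E0 by (simp add: power2_eq_square algebra_simps)
      (smt (verit) mult_nonneg_nonneg)
    moreover have "0^2 * s1^2 + r^2 * s2^2 \<le> E" by (rule H) (simp_all add: that)
    ultimately show False by simp
  qed
  show ?thesis
  proof (cases "a = 0")
    case a0: True
    show ?thesis
    proof (cases "b = 0")
      case True thus ?thesis using a0 E0 by simp
    next
      case False
      hence bp: "b > 0" using b by simp
      have "0^2 * s1^2 + (1/sqrt b)^2 * s2^2 \<le> E" by (rule H) (use bp a0 in \<open>simp_all add: power_divide\<close>)
      moreover have "s2 = b" using s s1z a0 by simp
      ultimately show ?thesis using a0 bp by (simp add: power_divide power2_eq_square)
    qed
  next
    case False
    hence ap: "a > 0" using a by simp
    show ?thesis
    proof (cases "b = 0")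
      case b0: True
      have "(1/sqrt a)^2 * s1^2 + 0^2 * s2^2 \<le> E" by (rule H) (use ap b0 in \<open>simp_all add: power_divide\<close>)
      moreover have "s1 = a" using s s2z b0 by simp
      ultimately show ?thesis using b0 ap by (simp add: power_divide power2_eq_square)
    next
      case False
      hence bp: "b > 0" using b by simp
      have "(1/sqrt a)^2 * s1^2 + (1/sqrt b)^2 * s2^2 \<le> E"
        by (rule H) (use ap bp in \<open>simp_all add: power_divide\<close>)
      hence "s1^2/a + s2^2/b \<le> E" using ap bp by (simp add: power_divide)
      moreover have "(s1+s2)^2/(a+b) \<le> s1^2/a + s2^2/b"
      proof -
        have "(s1*b - s2*a)^2 \<ge> 0" by simp
        hence "(s1+s2)^2 * (a*b) \<le> (s1^2*b + s2^2*a) * (a+b)"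
          by (simp add: power2_eq_square algebra_simps)
        thus ?thesis using ap bp by (simp add: field_simps)
      qed
      moreover have "(s1+s2)^2/(a+b) = a + b" using s ap bp by (simp add: power2_eq_square)
      ultimately show ?thesis by simp
    qed
  qed
qed



lemma mv_neg: "(A::real^'a^'b) *v (-x) = - (A *v x)"
  using matrix_vector_mult_scaleR[of A "-1" x] by simp

lemma J_eq:
  assumes "\<mu> \<in> noise_dists Q2"
  shows "(\<integral>\<^sup>+ e. ennreal (((lv \<bullet> x) - (u \<bullet> (H *v x + e)) - c)^2) \<partial>\<mu>)
       = ennreal ((lv \<bullet> x - u \<bullet> (H *v x) - c)^2 + (\<integral>e. (u \<bullet> e)^2 \<partial>\<mu>))"
proof -
  have eq: "\<And>e. (lv \<bullet> x) - (u \<bullet> (H *v x + e)) - c = (lv \<bullet> x - u \<bullet> (H *v x) - c) - u \<bullet> e"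
    by (simp add: inner_add_right)
  show ?thesis unfolding eq by (rule noise_J[OF assms])
qed

lemma W_ge:
  assumes "\<exists>f \<in> Gset Q1. F *v x = B *v f" "\<mu> \<in> noise_dists Q2"
  shows "ennreal ((lv \<bullet> x - u \<bullet> (H *v x) - c)^2 + (\<integral>e. (u \<bullet> e)^2 \<partial>\<mu>))
         \<le> worst_error F B H Q1 Q2 lv u c"
  unfolding worst_error_def J_eq[OF assms(2), symmetric]
  by (rule SUP_upper2[where i=x], use assms(1) in simp) (rule SUP_upper[OF assms(2)])

lemma ennreal_bound:
  assumes "\<And>E. W = ennreal E \<Longrightarrow> 0 \<le> E \<Longrightarrow> a \<le> E"
  shows "ennreal a \<le> W"
proof (cases W)
  case (real E)
  thus ?thesis using assms[of E] by (simp add: ennreal_le_iff)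
qed simp

lemma lower:
  fixes F :: "real^'n^'m" and B :: "real^'p^'m" and H :: "real^'n^'l"
    and Q1 :: "real^'p^'p" and Q2 :: "real^'l^'l" and lv :: "real^'n"
  assumes Q1: "sym_posdef Q1" and Q2: "sym_posdef Q2"
    and kp: "F *v p = (B ** matrix_inv Q1 ** transpose B) *v z"
    and kz: "transpose F *v z = lv - transpose H *v (Q2 *v (H *v p))"
  shows "ennreal (lv \<bullet> p) \<le> worst_error F B H Q1 Q2 lv u c"
proof -
  define f0 where "f0 = matrix_inv Q1 *v (transpose B *v z)"
  have Fp: "F *v p = B *v f0" using kp unfolding f0_def Mv .
  have Qf0: "Q1 *v f0 = transpose B *v z" unfolding f0_def
    using pd_inv[OF Q1] by (simp add: matrix_vector_mul_assoc)
  define a where "a = z \<bullet> (F *v p)"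
  define b where "b = (H *v p) \<bullet> (Q2 *v (H *v p))"
  have a_alt: "a = f0 \<bullet> (Q1 *v f0)" unfolding a_def Fp Qf0
    by (metis inner_commute tr_dot)
  have a0: "0 \<le> a" using a_alt pd_psd[OF Q1] by simp
  have b0: "0 \<le> b" unfolding b_def using pd_psd[OF Q2] by simp
  have lvp: "lv \<bullet> p = a + b"
  proof -
    have "lv = transpose F *v z + transpose H *v (Q2 *v (H *v p))" using kz by simp
    hence "lv \<bullet> p = (transpose F *v z) \<bullet> p + (transpose H *v (Q2 *v (H *v p))) \<bullet> p"
      by (simp add: inner_add_left del: transpose_matrix_vector)
    also have "\<dots> = a + b"
    proof -
      have "(transpose F *v z) \<bullet> p = a" unfolding a_def by (simp only: tr_dot)
      moreover have "(transpose H *v (Q2 *v (H *v p))) \<bullet> p = b" unfolding b_def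
        by (metis tr_dot inner_commute)
      ultimately show ?thesis by simp
    qed
    finally show ?thesis .
  qed
  define s1 where "s1 = lv \<bullet> p - u \<bullet> (H *v p)"
  define s2 where "s2 = u \<bullet> (H *v p)"
  show ?thesis
  proof (rule ennreal_bound)
    fix E assume WE: "worst_error F B H Q1 Q2 lv u c = ennreal E" and E0: "0 \<le> E"
    have "a + b \<le> E"
    proof (rule real_lb[OF a0 b0])
      show "s1 + s2 = a + b" unfolding s1_def s2_def using lvp by simp
      fix t r :: real assume ta: "t^2 * a \<le> 1" and rb: "r^2 * b \<le> 1"
      define v where "v = r *\<^sub>R (H *v p)"
      have vQ: "v \<bullet> (Q2 *v v) \<le> 1" unfolding v_def using rb b_def
        by (simp add: matrix_vector_mult_scaleR power2_eq_square mult_ac)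
      have mu: "tp v \<in> noise_dists Q2" by (rule tp_noise[OF vQ])
      have sq: "(\<integral>e. (u \<bullet> e)^2 \<partial>tp v) = r^2 * s2^2"
        unfolding tp_sq v_def s2_def by (simp add: power_mult_distrib)
      have inX: "\<exists>f \<in> Gset Q1. F *v (s *\<^sub>R (t *\<^sub>R p)) = B *v f" if "s = 1 \<or> s = -1" for s
      proof (intro bexI)
        show "F *v (s *\<^sub>R (t *\<^sub>R p)) = B *v ((s*t) *\<^sub>R f0)"
          by (simp add: matrix_vector_mult_scaleR Fp)
        have "(Q1 *v ((s*t) *\<^sub>R f0)) \<bullet> ((s*t) *\<^sub>R f0) = (s*t)^2 * a"
          unfolding a_alt by (simp add: matrix_vector_mult_scaleR power2_eq_square inner_commute)
        also have "\<dots> = t^2 * a" using that by (auto simp: power2_eq_square)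
        finally show "(s*t) *\<^sub>R f0 \<in> Gset Q1" unfolding Gset_def using ta by simp
      qed
      have e1: "ennreal ((lv \<bullet> (1 *\<^sub>R (t *\<^sub>R p)) - u \<bullet> (H *v (1 *\<^sub>R (t *\<^sub>R p))) - c)^2 + r^2 * s2^2)
          \<le> ennreal E" using W_ge[OF inX[of 1] mu, where lv=lv and u=u and c=c and H=H] sq WE by simp
      have e2: "ennreal ((lv \<bullet> ((-1) *\<^sub>R (t *\<^sub>R p)) - u \<bullet> (H *v ((-1) *\<^sub>R (t *\<^sub>R p))) - c)^2 + r^2 * s2^2)
          \<le> ennreal E" using W_ge[OF inX[of "-1"] mu, where lv=lv and u=u and c=c and H=H] sq WE by simp
      have d1: "lv \<bullet> (1 *\<^sub>R (t *\<^sub>R p)) - u \<bullet> (H *v (1 *\<^sub>R (t *\<^sub>R p))) - c = t * s1 - c"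
        unfolding s1_def by (simp add: matrix_vector_mult_scaleR algebra_simps)
      have d2: "lv \<bullet> ((-1) *\<^sub>R (t *\<^sub>R p)) - u \<bullet> (H *v ((-1) *\<^sub>R (t *\<^sub>R p))) - c = -(t * s1) - c"
        unfolding s1_def by (simp add: matrix_vector_mult_scaleR mv_neg algebra_simps)
      have "(t * s1 - c)^2 + r^2 * s2^2 \<le> E" "(-(t * s1) - c)^2 + r^2 * s2^2 \<le> E"
        using e1[unfolded d1] e2[unfolded d2] ennreal_le_iff[OF E0] by blast+
      moreover have "t^2 * s1^2 \<le> max ((t * s1 - c)^2) ((-(t * s1) - c)^2)"
        by (simp add: power2_eq_square algebra_simps) (smt (verit) mult_nonneg_nonneg zero_le_square)
      ultimately show "t^2 * s1^2 + r^2 * s2^2 \<le> E" by linarith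
    qed
    thus "lv \<bullet> p \<le> E" using lvp by simp
  qed
qed



lemma upper:
  fixes F :: "real^'n^'m" and B :: "real^'p^'m" and H :: "real^'n^'l"
    and Q1 :: "real^'p^'p" and Q2 :: "real^'l^'l" and lv :: "real^'n"
  assumes Q1: "sym_posdef Q1" and Q2: "sym_posdef Q2"
    and kp: "F *v p = (B ** matrix_inv Q1 ** transpose B) *v z"
    and kz: "transpose F *v z = lv - transpose H *v (Q2 *v (H *v p))"
  shows "worst_error F B H Q1 Q2 lv (Q2 *v (H *v p)) 0 \<le> ennreal (lv \<bullet> p)"
proof -
  define f0 where "f0 = matrix_inv Q1 *v (transpose B *v z)"
  have Fp: "F *v p = B *v f0" using kp unfolding f0_def Mv .
  have Qf0: "Q1 *v f0 = transpose B *v z" unfolding f0_def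
    using pd_inv[OF Q1] by (simp add: matrix_vector_mul_assoc)
  define a where "a = z \<bullet> (F *v p)"
  define b where "b = (H *v p) \<bullet> (Q2 *v (H *v p))"
  define w where "w = H *v p"
  define uh where "uh = Q2 *v (H *v p)"
  have sym1: "transpose Q1 = Q1" using Q1 sym_posdef_def by blast
  have sym2: "transpose Q2 = Q2" using Q2 sym_posdef_def by blast
  have a_alt: "a = f0 \<bullet> (Q1 *v f0)" unfolding a_def Fp Qf0
    by (metis inner_commute tr_dot)
  have lvp: "lv \<bullet> p = a + b"
  proof -
    have "lv = transpose F *v z + transpose H *v (Q2 *v (H *v p))" using kz by simp
    hence "lv \<bullet> p = (transpose F *v z) \<bullet> p + (transpose H *v (Q2 *v (H *v p))) \<bullet> p"
      by (simp add: inner_add_left del: transpose_matrix_vector)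
    also have "\<dots> = a + b"
    proof -
      have "(transpose F *v z) \<bullet> p = a" unfolding a_def by (simp only: tr_dot)
      moreover have "(transpose H *v (Q2 *v (H *v p))) \<bullet> p = b" unfolding b_def
        by (metis tr_dot inner_commute)
      ultimately show ?thesis by simp
    qed
    finally show ?thesis .
  qed
  show ?thesis
    unfolding worst_error_def uh_def[symmetric]
  proof (intro SUP_least)
    fix x \<mu> assume xX: "x \<in> {x. \<exists>f\<in>Gset Q1. F *v x = B *v f}" and mu: "\<mu> \<in> noise_dists Q2"
    then obtain f where fG: "f \<in> Gset Q1" and Fx: "F *v x = B *v f" by blast
    have g: "good \<mu>" by (rule noise_good[OF mu])
    interpret prob_space \<mu> using g good_def by blast
    define d where "d = lv \<bullet> x - uh \<bullet> (H *v x) - 0"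
    have "d = (lv - transpose H *v uh) \<bullet> x" unfolding d_def
      by (simp add: inner_diff_left tr_dot del: transpose_matrix_vector)
    also have "\<dots> = (transpose F *v z) \<bullet> x" using kz uh_def by simp
    also have "\<dots> = z \<bullet> (B *v f)" by (simp only: tr_dot Fx)
    also have "\<dots> = (Q1 *v f0) \<bullet> f" unfolding Qf0 by (metis tr_dot transpose_transpose)
    also have "\<dots> = f0 \<bullet> (Q1 *v f)" by (metis inner_commute sym_dot[OF sym1])
    finally have dd: "d = f0 \<bullet> (Q1 *v f)" .
    have "d^2 \<le> (f0 \<bullet> (Q1 *v f0)) * (f \<bullet> (Q1 *v f))"
      unfolding dd by (rule gen_CS[OF sym1 pd_psd[OF Q1]])
    also have "\<dots> = a * (f \<bullet> (Q1 *v f))" by (simp add: a_alt)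
    also have "\<dots> \<le> a * 1"
    proof (rule mult_left_mono)
      show "f \<bullet> (Q1 *v f) \<le> 1" using fG unfolding Gset_def by (simp add: inner_commute)
      show "0 \<le> a" using a_alt pd_psd[OF Q1] by simp
    qed
    finally have d2: "d^2 \<le> a" by simp
    have "(\<integral>e. (uh \<bullet> e)^2 \<partial>\<mu>) \<le> (\<integral>e. b * (e \<bullet> (Q2 *v e)) \<partial>\<mu>)"
    proof (rule integral_mono)
      show "integrable \<mu> (\<lambda>e. (uh \<bullet> e)^2)" by (rule good_sq[OF g])
      show "integrable \<mu> (\<lambda>e. b * (e \<bullet> (Q2 *v e)))" by (intro integrable_mult_right good_quad[OF g])
      fix e :: "real^'l"
      have "uh \<bullet> e = w \<bullet> (Q2 *v e)" unfolding uh_def w_def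
        by (metis inner_commute sym_dot[OF sym2])
      hence "(uh \<bullet> e)^2 = (w \<bullet> (Q2 *v e))^2" by simp
      also have "\<dots> \<le> (w \<bullet> (Q2 *v w)) * (e \<bullet> (Q2 *v e))" by (rule gen_CS[OF sym2 pd_psd[OF Q2]])
      finally show "(uh \<bullet> e)^2 \<le> b * (e \<bullet> (Q2 *v e))" unfolding b_def w_def .
    qed
    also have "\<dots> = b * trace (Q2 ** corr_matrix \<mu>)" using good_trace[OF g] by simp
    also have "\<dots> \<le> b * 1"
      by (rule mult_left_mono) (use mu b_def pd_psd[OF Q2] in \<open>auto simp: noise_dists_def\<close>)
    finally have i2: "(\<integral>e. (uh \<bullet> e)^2 \<partial>\<mu>) \<le> b" by simp
    show "(\<integral>\<^sup>+ e. ennreal ((lv \<bullet> x - uh \<bullet> (H *v x + e) - 0)^2) \<partial>\<mu>) \<le> ennreal (lv \<bullet> p)"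
      unfolding J_eq[OF mu] d_def[symmetric] lvp
      by (rule ennreal_leI) (use d2 i2 in simp)
  qed
qed

lemma infinite:
  fixes F :: "real^'n^'m" and B :: "real^'p^'m" and H :: "real^'n^'l"
    and Q1 :: "real^'p^'p" and Q2 :: "real^'l^'l" and lv :: "real^'n"
  assumes nF: "lv \<notin> Fspace F H"
  shows "worst_error F B H Q1 Q2 lv u c = \<top>"
proof -
  define av where "av = lv - transpose H *v u"
  obtain y r where y: "y \<in> span (range ((*v) (transpose F)))"
    and orth: "\<And>w. w \<in> span (range ((*v) (transpose F))) \<Longrightarrow> orthogonal r w"
    and dec: "av = y + r"
    by (rule orthogonal_subspace_decomp_exists[of "range ((*v) (transpose F))" av]) blast
  have "y \<in> range ((*v) (transpose F))"
    using y span_linear_image[of "(*v) (transpose F)" UNIV] by (simp del: transpose_matrix_vector)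
  then obtain z0 where yz: "y = transpose F *v z0" by blast
  have r0: "r \<noteq> 0"
  proof
    assume "r = 0"
    hence "lv = transpose F *v z0 + transpose H *v u" using dec yz av_def by (simp add: algebra_simps)
    thus False using nF unfolding Fspace_def by blast
  qed
  have "r \<bullet> (transpose F *v (F *v r)) = 0"
    using orth[of "transpose F *v (F *v r)"] by (simp add: span_base orthogonal_def)
  hence "(F *v r) \<bullet> (F *v r) = 0" by (metis inner_commute tr_dot)
  hence Fr: "F *v r = 0" by simp
  have "y \<bullet> r = 0" using orth[OF y] by (simp add: orthogonal_def inner_commute)
  hence sr: "av \<bullet> r = r \<bullet> r" using dec by (simp add: inner_add_left)
  define s where "s = av \<bullet> r"
  have s0: "s \<noteq> 0" using sr r0 s_def by simp
  have mu: "tp 0 \<in> noise_dists Q2" by (rule tp_noise) simp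
  have key: "ennreal ((t * s - c)^2) \<le> worst_error F B H Q1 Q2 lv u c" for t
  proof -
    have inX: "\<exists>f \<in> Gset Q1. F *v (t *\<^sub>R r) = B *v f"
      by (rule bexI[of _ 0]) (simp_all add: matrix_vector_mult_scaleR Fr Gset_def)
    have "lv \<bullet> (t *\<^sub>R r) - u \<bullet> (H *v (t *\<^sub>R r)) - c = t * s - c"
      unfolding s_def av_def by (simp add: matrix_vector_mult_scaleR inner_diff_left tr_dot algebra_simps
          del: transpose_matrix_vector)
    thus ?thesis using W_ge[OF inX mu, where lv=lv and u=u and c=c and H=H] tp_sq[where u=u and v=0] by simp
  qed
  show ?thesis
  proof (rule ccontr)
    assume "worst_error F B H Q1 Q2 lv u c \<noteq> \<top>"
    then obtain E where WE: "worst_error F B H Q1 Q2 lv u c = ennreal E" and E0: "0 \<le> E"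
      by (cases "worst_error F B H Q1 Q2 lv u c") auto
    define t where "t = (c + E + 1) / s"
    have "t * s - c = E + 1" unfolding t_def using s0 by simp
    hence "(E+1)^2 \<le> E" using key[of t] WE E0 by (simp add: ennreal_le_iff)
    moreover have "(E+1)^2 > E" using E0 by (simp add: power2_eq_square algebra_simps)
      (smt (verit) mult_nonneg_nonneg)
    ultimately show False by simp
  qed
qed


theorem mainTheorem1:
  fixes F :: "real^'n^'m" and B :: "real^'p^'m" and H :: "real^'n^'l"
    and Q1 :: "real^'p^'p" and Q2 :: "real^'l^'l" and lv :: "real^'n"
  assumes "sym_posdef Q1" and "sym_posdef Q2"
  shows "(lv \<in> Fspace F H \<longrightarrow>
            (\<exists>p z. F *v p = (B ** matrix_inv Q1 ** transpose B) *v z \<and>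
                   transpose F *v z = lv - transpose H *v (Q2 *v (H *v p))) \<and>
            (\<forall>p z. F *v p = (B ** matrix_inv Q1 ** transpose B) *v z \<and>
                   transpose F *v z = lv - transpose H *v (Q2 *v (H *v p)) \<longrightarrow>
               worst_error F B H Q1 Q2 lv (Q2 *v (H *v p)) 0 = minimax_error F B H Q1 Q2 lv \<and>
               minimax_error F B H Q1 Q2 lv = ennreal (lv \<bullet> p)))
       \<and> (lv \<notin> Fspace F H \<longrightarrow> minimax_error F B H Q1 Q2 lv = \<infinity>)"
proof (intro conjI impI)
  assume lF: "lv \<in> Fspace F H"
  show "\<exists>p z. F *v p = (B ** matrix_inv Q1 ** transpose B) *v z \<and>
                   transpose F *v z = lv - transpose H *v (Q2 *v (H *v p))"
    by (rule kkt_exists[OF assms lF])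
  show "\<forall>p z. F *v p = (B ** matrix_inv Q1 ** transpose B) *v z \<and>
                   transpose F *v z = lv - transpose H *v (Q2 *v (H *v p)) \<longrightarrow>
               worst_error F B H Q1 Q2 lv (Q2 *v (H *v p)) 0 = minimax_error F B H Q1 Q2 lv \<and>
               minimax_error F B H Q1 Q2 lv = ennreal (lv \<bullet> p)"
  proof (intro allI impI)
    fix p z
    assume "F *v p = (B ** matrix_inv Q1 ** transpose B) *v z \<and>
                   transpose F *v z = lv - transpose H *v (Q2 *v (H *v p))"
    hence kp: "F *v p = (B ** matrix_inv Q1 ** transpose B) *v z"
      and kz: "transpose F *v z = lv - transpose H *v (Q2 *v (H *v p))" by auto
    have up: "worst_error F B H Q1 Q2 lv (Q2 *v (H *v p)) 0 \<le> ennreal (lv \<bullet> p)"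
      by (rule upper[OF assms kp kz])
    have lo: "\<And>u c. ennreal (lv \<bullet> p) \<le> worst_error F B H Q1 Q2 lv u c"
      by (rule lower[OF assms kp kz])
    have w: "worst_error F B H Q1 Q2 lv (Q2 *v (H *v p)) 0 = ennreal (lv \<bullet> p)"
      using up lo by (blast intro: antisym)
    have m1: "minimax_error F B H Q1 Q2 lv \<le> ennreal (lv \<bullet> p)"
      unfolding minimax_error_def
      by (rule INF_lower2[where i="(Q2 *v (H *v p), 0)"]) (use w in simp_all)
    have m2: "ennreal (lv \<bullet> p) \<le> minimax_error F B H Q1 Q2 lv"
      unfolding minimax_error_def by (rule INF_greatest) (rule lo)
    show "worst_error F B H Q1 Q2 lv (Q2 *v (H *v p)) 0 = minimax_error F B H Q1 Q2 lv \<and>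
               minimax_error F B H Q1 Q2 lv = ennreal (lv \<bullet> p)"
      using w m1 m2 by (simp add: antisym)
  qed
next
  assume nF: "lv \<notin> Fspace F H"
  show "minimax_error F B H Q1 Q2 lv = \<infinity>"
    unfolding minimax_error_def by (simp add: infinite[OF nF])
qed

end
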